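(* Let $A,B$ be finite nonempty subsets of a group $G$ and put $K=\langle BB^{-1}\rangle$. Then for every integer $j\ge1$, $$|B^j|\ge\min\Big(|K|,\frac{(j+1)|B|}{2}\Big),$$ and $$|AB|\ge \min\Big(|AK|,\ |A|+\frac{|B|}{2}\Big).$$
   Context: $XY=\{xy: x\in X, y\in Y\}$ denotes the Minkowski product, $B^j$ the $j$-fold product $B\cdots B$, $BB^{-1}=\{bc^{-1}:b,c\in B\}$, and $\langle T\rangle$ the subgroup generated by $T$ (its cardinality may be infinite). *)

theory Defs
  imports "HOL-Algebra.Algebra"
begin

fun set_pow :: "('a, 'b) monoid_scheme \<Rightarrow> 'a set \<Rightarrow> nat \<Rightarrow> 'a set" where
  "set_pow G B 0 = {\<one>\<^bsub>G\<^esub>}"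
| "set_pow G B (Suc n) = set_pow G B n <#>\<^bsub>G\<^esub> B"

end

theory Submission
  imports Defs
begin

definition fam :: "('a,'b) monoid_scheme \<Rightarrow> 'a set \<Rightarrow> 'a set \<Rightarrow> 'a set \<Rightarrow> bool" where
  "fam M K Q S = (S \<subseteq> K \<and> finite S \<and> S \<noteq> {} \<and> set_mult M S Q \<noteq> K)"

context group
begin

lemma mem_set_mult_iff: "z \<in> S <#> Q \<longleftrightarrow> (\<exists>x\<in>S. \<exists>q\<in>Q. z = x \<otimes> q)"
  unfolding set_mult_def by blast

lemma set_mult_image: "S <#> Q = (\<lambda>(x,q). x \<otimes> q) ` (S \<times> Q)"
  unfolding set_mult_def by auto

lemma finite_set_mult: "finite S \<Longrightarrow> finite Q \<Longrightarrow> finite (S <#> Q)"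
  by (simp add: set_mult_image)

lemma set_mult_sup1: "S \<subseteq> carrier G \<Longrightarrow> \<one> \<in> Q \<Longrightarrow> S \<subseteq> S <#> Q"
proof
  fix x assume "S \<subseteq> carrier G" "\<one> \<in> Q" "x \<in> S"
  then have "x = x \<otimes> \<one>" "x \<in> S" "\<one> \<in> Q" by auto
  then show "x \<in> S <#> Q" unfolding mem_set_mult_iff by blast
qed

lemma set_mult_sub_subgroup: "subgroup K G \<Longrightarrow> S \<subseteq> K \<Longrightarrow> Q \<subseteq> K \<Longrightarrow> S <#> Q \<subseteq> K"
  unfolding set_mult_def by (blast intro: subgroup.m_closed)

lemma set_mult_Un: "(S \<union> Y) <#> Q = (S <#> Q) \<union> (Y <#> Q)"
  unfolding set_mult_def by blast

lemma set_mult_Int: "(S \<inter> Y) <#> Q \<subseteq> (S <#> Q) \<inter> (Y <#> Q)"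
  unfolding set_mult_def by blast

lemma set_mult_translate:
  assumes "a \<in> carrier G" "S \<subseteq> carrier G" "Q \<subseteq> carrier G"
  shows "((\<otimes>) a ` S) <#> Q = (\<otimes>) a ` (S <#> Q)"
proof
  show "(\<otimes>) a ` S <#> Q \<subseteq> (\<otimes>) a ` (S <#> Q)"
  proof
    fix z assume "z \<in> (\<otimes>) a ` S <#> Q"
    then obtain x q where xq: "x \<in> S" "q \<in> Q" "z = (a \<otimes> x) \<otimes> q" unfolding mem_set_mult_iff by blast
    then have "z = a \<otimes> (x \<otimes> q)" using assms m_assoc by blast
    moreover have "x \<otimes> q \<in> S <#> Q" using xq unfolding mem_set_mult_iff by blast
    ultimately show "z \<in> (\<otimes>) a ` (S <#> Q)" by blast
  qed
  show "(\<otimes>) a ` (S <#> Q) \<subseteq> (\<otimes>) a ` S <#> Q"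
  proof
    fix z assume "z \<in> (\<otimes>) a ` (S <#> Q)"
    then obtain w where w: "w \<in> S <#> Q" "z = a \<otimes> w" by blast
    then obtain x q where xq: "x \<in> S" "q \<in> Q" "z = a \<otimes> (x \<otimes> q)" unfolding mem_set_mult_iff by blast
    then have "z = (a \<otimes> x) \<otimes> q" using assms m_assoc by (metis subsetD)
    moreover have "a \<otimes> x \<in> (\<otimes>) a ` S" using xq by blast
    ultimately show "z \<in> (\<otimes>) a ` S <#> Q" using xq(2) unfolding mem_set_mult_iff by blast
  qed
qed

lemma card_translate: "a \<in> carrier G \<Longrightarrow> S \<subseteq> carrier G \<Longrightarrow> card ((\<otimes>) a ` S) = card S"
  by (rule card_image) (rule inj_onI, metis l_cancel subsetD)

lemma translate_back: "a \<in> carrier G \<Longrightarrow> S \<subseteq> carrier G \<Longrightarrow> (\<otimes>) (inv a) ` ((\<otimes>) a ` S) = S"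
proof -
  assume a: "a \<in> carrier G" and S: "S \<subseteq> carrier G"
  have "\<And>x. x \<in> S \<Longrightarrow> inv a \<otimes> (a \<otimes> x) = x" using a S by (simp add: m_assoc[symmetric] subsetD)
  then show ?thesis by (simp add: image_image)
qed

lemma translate_subgroup: "subgroup K G \<Longrightarrow> a \<in> K \<Longrightarrow> (\<otimes>) a ` K = K"
proof -
  assume K: "subgroup K G" and a: "a \<in> K"
  show ?thesis
  proof
    show "(\<otimes>) a ` K \<subseteq> K"
    proof
      fix y assume "y \<in> (\<otimes>) a ` K"
      then obtain k where k: "k \<in> K" "y = a \<otimes> k" by blast
      show "y \<in> K" unfolding k(2) by (rule subgroup.m_closed[OF K a k(1)])
    qed
    show "K \<subseteq> (\<otimes>) a ` K"
    proof
      fix k assume k: "k \<in> K"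
      have ac: "a \<in> carrier G" "k \<in> carrier G" using subgroup.mem_carrier[OF K a] subgroup.mem_carrier[OF K k] by auto
      have "k = a \<otimes> (inv a \<otimes> k)" using ac by (metis inv_closed m_assoc r_inv l_one)
      moreover have "inv a \<otimes> k \<in> K" using subgroup.m_closed[OF K subgroup.m_inv_closed[OF K a] k] .
      ultimately show "k \<in> (\<otimes>) a ` K" by blast
    qed
  qed
qed

lemma fam_translate:
  assumes K: "subgroup K G" and QK: "Q \<subseteq> K" and a: "a \<in> K" and F: "fam G K Q Y"
  shows "fam G K Q ((\<otimes>) a ` Y) \<and> card ((\<otimes>) a ` Y) = card Y \<and>
         card (((\<otimes>) a ` Y) <#> Q) = card (Y <#> Q)"
proof -
  have Kc: "K \<subseteq> carrier G" using K subgroup.subset by blast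
  have ac: "a \<in> carrier G" using a Kc by blast
  have Yc: "Y \<subseteq> carrier G" using F Kc unfolding fam_def by blast
  have Qc: "Q \<subseteq> carrier G" using QK Kc by blast
  have YQc: "Y <#> Q \<subseteq> carrier G" using Yc Qc setmult_subset_G by blast
  have tr: "((\<otimes>) a ` Y) <#> Q = (\<otimes>) a ` (Y <#> Q)" by (rule set_mult_translate[OF ac Yc Qc])
  have "(\<otimes>) a ` Y \<subseteq> K" using F K a unfolding fam_def by (auto simp: subgroup.m_closed)
  moreover have "(\<otimes>) a ` (Y <#> Q) \<noteq> K"
  proof
    assume h: "(\<otimes>) a ` (Y <#> Q) = K"
    have "Y <#> Q = (\<otimes>) (inv a) ` ((\<otimes>) a ` (Y <#> Q))" using translate_back[OF ac YQc] by simp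
    also have "\<dots> = K" using h translate_subgroup[OF K] K a by (simp add: subgroup.m_inv_closed)
    finally show False using F unfolding fam_def by blast
  qed
  ultimately have "fam G K Q ((\<otimes>) a ` Y)" using F tr unfolding fam_def by auto
  thus ?thesis using tr card_translate[OF ac Yc] card_translate[OF ac YQc] by simp
qed


lemma fam_props:
  assumes "subgroup K G" "Q \<subseteq> K" "fam G K Q S"
  shows "S \<subseteq> carrier G" "finite S" "S \<noteq> {}" "S <#> Q \<subseteq> K" "S <#> Q \<noteq> K" "S \<subseteq> K"
  using assms subgroup.subset set_mult_sub_subgroup unfolding fam_def by blast+

lemma atom_bound:
  assumes K: "subgroup K G" and QK: "Q \<subseteq> K" "finite Q" "\<one> \<in> Q"
    and gen: "\<And>H. subgroup H G \<Longrightarrow> Q \<subseteq> H \<Longrightarrow> K \<subseteq> H"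
    and Q': "Q' = (\<lambda>q. inv q) ` Q"
    and least: "\<And>Y R. R \<in> {Q,Q'} \<Longrightarrow> fam G K R Y \<Longrightarrow> \<kappa> + card Y \<le> card (Y <#> R)"
    and leastn: "\<And>Y R. R \<in> {Q,Q'} \<Longrightarrow> fam G K R Y \<Longrightarrow> card (Y <#> R) = \<kappa> + card Y \<Longrightarrow> n \<le> card Y"
    and S: "fam G K Q S" "card (S <#> Q) = \<kappa> + card S" "card S = n"
  shows "card Q \<le> 2*\<kappa>"
proof -
  have Kc: "K \<subseteq> carrier G" using K subgroup.subset by blast
  have Qc: "Q \<subseteq> carrier G" using QK Kc by blast
  have Sc: "S \<subseteq> K" "S \<noteq> {}" using S(1) unfolding fam_def by auto
  obtain x0 where x0: "x0 \<in> S" using Sc by blast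
  have x0K: "inv x0 \<in> K" using subgroup.m_inv_closed[OF K] x0 Sc by blast
  define S1 where "S1 = (\<otimes>) (inv x0) ` S"
  have S1: "fam G K Q S1" "card S1 = n" "card (S1 <#> Q) = \<kappa> + n"
    using fam_translate[OF K QK(1) x0K S(1)] S unfolding S1_def by auto
  have S1c: "S1 \<subseteq> K" "S1 \<subseteq> carrier G" "finite S1" "S1 <#> Q \<subseteq> K" "S1 <#> Q \<noteq> K"
    using fam_props[OF K QK(1) S1(1)] by auto
  have "inv x0 \<otimes> x0 = \<one>" using x0 Sc Kc by (simp add: subsetD)
  then have one: "\<one> \<in> S1" unfolding S1_def using x0 by (metis image_eqI)
  have fS1Q: "finite (S1 <#> Q)" using S1c QK finite_set_mult by blast
  have clos: "(\<otimes>) (inv x) ` S1 = S1" if x: "x \<in> S1" for x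
  proof -
    have xK: "inv x \<in> K" using subgroup.m_inv_closed[OF K] x S1c by blast
    define Y where "Y = (\<otimes>) (inv x) ` S1"
    have Y: "fam G K Q Y" "card Y = n" "card (Y <#> Q) = \<kappa> + n"
      using fam_translate[OF K QK(1) xK S1(1)] S1 unfolding Y_def by auto
    have Yc: "Y \<subseteq> K" "Y \<subseteq> carrier G" "finite Y" "Y <#> Q \<subseteq> K" "Y <#> Q \<noteq> K"
      using fam_props[OF K QK(1) Y(1)] by auto
    have fYQ: "finite (Y <#> Q)" using Yc QK finite_set_mult by blast
    have "inv x \<otimes> x = \<one>" using x S1c by (simp add: subsetD)
    then have oneY: "\<one> \<in> Y" unfolding Y_def using x by (metis image_eqI)
    define I where "I = S1 \<inter> Y"
    define U where "U = S1 \<union> Y"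
    have famI: "fam G K Q I"
    proof -
      have "I <#> Q \<subseteq> S1 <#> Q" unfolding I_def using set_mult_Int by blast
      then have "I <#> Q \<noteq> K" using S1c by blast
      moreover have "I \<noteq> {}" using one oneY I_def by blast
      ultimately show ?thesis unfolding fam_def I_def using S1c by auto
    qed
    have leI: "\<kappa> + card I \<le> card (I <#> Q)" using least[of Q I] famI by simp
    have cardIU: "card I + card U = 2*n"
      using card_Un_Int[OF S1c(3) Yc(3)] S1 Y unfolding I_def U_def by simp
    have UQ: "U <#> Q = (S1 <#> Q) \<union> (Y <#> Q)" unfolding U_def by (rule set_mult_Un)
    have IQsub: "I <#> Q \<subseteq> (S1 <#> Q) \<inter> (Y <#> Q)" unfolding I_def by (rule set_mult_Int)
    have submod: "card (I <#> Q) + card (U <#> Q) \<le> 2*\<kappa> + 2*n"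
    proof -
      have "card (I <#> Q) \<le> card ((S1 <#> Q) \<inter> (Y <#> Q))"
        using IQsub fS1Q by (simp add: card_mono)
      moreover have "card ((S1 <#> Q) \<union> (Y <#> Q)) + card ((S1 <#> Q) \<inter> (Y <#> Q)) = 2*\<kappa>+2*n"
        using card_Un_Int[OF fS1Q fYQ] S1 Y by simp
      ultimately show ?thesis using UQ by simp
    qed
    have UQne: "U <#> Q \<noteq> K"
    proof
      assume UK: "U <#> Q = K"
      have fK: "finite K" using UK UQ fS1Q fYQ by (metis finite_UnI)
      define Z where "Z = K - (S1 <#> Q)"
      have fZ: "finite Z" using fK Z_def by simp
      have Zne: "Z \<noteq> {}" using S1c Z_def by blast
      have cardZ: "card Z = card K - (\<kappa> + n)" using S1c S1 fK Z_def by (simp add: card_Diff_subset fS1Q)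
      have ZQ': "Z <#> Q' \<subseteq> K - S1"
      proof
        fix w assume "w \<in> Z <#> Q'"
        then obtain z q where zq: "z \<in> Z" "q \<in> Q" "w = z \<otimes> inv q" unfolding mem_set_mult_iff Q' by blast
        have zc: "z \<in> carrier G" "q \<in> carrier G" using zq Z_def Kc Qc by auto
        have wK: "w \<in> K" using zq Z_def QK K by (auto simp: subgroup.m_closed subgroup.m_inv_closed)
        have "w \<notin> S1"
        proof
          assume "w \<in> S1"
          moreover have "z = w \<otimes> q" using zq zc by (metis inv_closed m_assoc l_inv r_one)
          ultimately have "z \<in> S1 <#> Q" using zq unfolding mem_set_mult_iff by blast
          then show False using zq Z_def by blast
        qed
        then show "w \<in> K - S1" using wK by blast
      qed
      have famZ: "fam G K Q' Z"
      proof -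
        have "Z <#> Q' \<noteq> K"
        proof
          assume "Z <#> Q' = K"
          then have "S1 \<subseteq> K - S1" using ZQ' S1c by blast
          then show False using one by blast
        qed
        then show ?thesis unfolding fam_def Z_def using fZ Zne Z_def by auto
      qed
      have le1: "\<kappa> + card Z \<le> card (Z <#> Q')" using least[of Q' Z] famZ by simp
      have le2: "card (Z <#> Q') \<le> card K - n"
      proof -
        have "card (Z <#> Q') \<le> card (K - S1)" using ZQ' fK by (simp add: card_mono)
        also have "\<dots> = card K - n" using S1c S1 fK by (simp add: card_Diff_subset)
        finally show ?thesis .
      qed
      have "card (K - (S1 <#> Q)) = card K - card (S1 <#> Q)" using S1c fS1Q by (simp add: card_Diff_subset)
      have cKge: "\<kappa> + n \<le> card K" using card_mono[OF fK S1c(4)] S1(3) by simp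
      have eqZ: "card (Z <#> Q') = \<kappa> + card Z" using le1 le2 cardZ cKge by linarith
      have nZ: "n \<le> card Z" using leastn[of Q' Z] famZ eqZ by simp
      have Ipos: "card I \<ge> 1" using famI unfolding fam_def by (simp add: Suc_leI card_gt_0_iff)
      have cUK: "card (U <#> Q) = card K" using UK by simp
      have "card K \<le> \<kappa> + 2*n - card I" using submod cUK leI by arith
      moreover have "card I \<le> n" using S1(2) card_mono[OF S1c(3), of I] unfolding I_def by simp
      ultimately show False using nZ cardZ Ipos cKge by arith
    qed
    have famU: "fam G K Q U" using UQne S1c(1,3) Yc(1,3) one unfolding fam_def U_def by blast
    have leU: "\<kappa> + card U \<le> card (U <#> Q)" using least[of Q U] famU by simp
    have eqI: "card (I <#> Q) = \<kappa> + card I" using leI leU submod cardIU by linarith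
    have "n \<le> card I" using leastn[of Q I] famI eqI by simp
    moreover have IS: "I \<subseteq> S1" unfolding I_def by blast
    moreover have "card I \<le> n" using card_mono[OF S1c(3) IS] S1(2) by simp
    ultimately have "I = S1" using card_subset_eq[OF S1c(3) IS] S1(2) by simp
    then have SY: "S1 \<subseteq> Y" unfolding I_def by blast
    then have "S1 = Y" using card_subset_eq[OF Yc(3) SY] S1(2) Y(2) by simp
    then show ?thesis unfolding Y_def by simp
  qed
  have invS1: "inv x \<in> S1" if "x \<in> S1" for x
  proof -
    have "inv x \<otimes> \<one> \<in> (\<otimes>) (inv x) ` S1" using one by blast
    moreover have "inv x \<otimes> \<one> = inv x" using that S1c by (simp add: subsetD)
    ultimately show ?thesis using clos[OF that] by simp
  qed
  have subH: "subgroup S1 G"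
  proof
    show "S1 \<subseteq> carrier G" using S1c by simp
    show "\<one> \<in> S1" by (rule one)
    show "inv x \<in> S1" if "x \<in> S1" for x using invS1 that .
    show "x \<otimes> y \<in> S1" if "x \<in> S1" "y \<in> S1" for x y
    proof -
      have "x \<otimes> y \<in> (\<otimes>) (inv (inv x)) ` S1" using that S1c by auto
      then show ?thesis using clos[OF invS1[OF that(1)]] by simp
    qed
  qed
  have "\<not> Q \<subseteq> S1"
  proof
    assume "Q \<subseteq> S1"
    then have "K \<subseteq> S1" using gen subH by blast
    then have "S1 = K" using S1c by blast
    then have "S1 <#> Q = K" using set_mult_sup1[OF S1c(2) QK(3)] S1c by blast
    then show False using S1c by blast
  qed
  then obtain q where q: "q \<in> Q" "q \<notin> S1" by blast
  have qc: "q \<in> carrier G" using q Qc by blast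
  define T where "T = (\<lambda>h. h \<otimes> q) ` S1"
  have "inj_on (\<lambda>h. h \<otimes> q) S1"
  proof (rule inj_onI)
    fix x y assume xy: "x \<in> S1" "y \<in> S1" "x \<otimes> q = y \<otimes> q"
    have "x \<in> carrier G" "y \<in> carrier G" using xy S1c by auto
    then show "x = y" using xy(3) qc r_cancel by blast
  qed
  then have cT: "card T = n" unfolding T_def using S1 card_image by metis
  have disj: "S1 \<inter> T = {}"
  proof (rule ccontr)
    assume "S1 \<inter> T \<noteq> {}"
    then obtain h h' where hh: "h \<in> S1" "h' \<in> S1" "h = h' \<otimes> q" unfolding T_def by blast
    have hc: "h \<in> carrier G" "h' \<in> carrier G" using hh S1c by auto
    have "q = inv h' \<otimes> h" using hh hc qc by (metis inv_closed m_assoc l_inv l_one)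
    then have "q \<in> S1" using subgroup.m_closed[OF subH subgroup.m_inv_closed[OF subH hh(2)] hh(1)] by simp
    then show False using q by blast
  qed
  have "T \<subseteq> S1 <#> Q" unfolding T_def using q(1) by (auto simp: mem_set_mult_iff intro!: bexI)
  then have "S1 \<union> T \<subseteq> S1 <#> Q" using set_mult_sup1[OF S1c(2) QK(3)] by blast
  then have "card (S1 \<union> T) \<le> \<kappa> + n" using S1(3) card_mono[OF fS1Q] by simp
  moreover have "card (S1 \<union> T) = 2*n" using card_Un_disjoint[OF S1c(3) _ disj] cT S1 T_def S1c by simp
  ultimately have kn: "n \<le> \<kappa>" by simp
  have "Q \<subseteq> S1 <#> Q"
  proof
    fix p assume p: "p \<in> Q"
    then have "p = \<one> \<otimes> p" using Qc by (simp add: subsetD)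
    then show "p \<in> S1 <#> Q" unfolding mem_set_mult_iff using one p by blast
  qed
  then have "card Q \<le> \<kappa> + n" using S1(3) card_mono[OF fS1Q] by simp
  then show ?thesis using kn by simp
qed

lemma core:
  assumes K: "subgroup K G" and PK: "P \<subseteq> K" "finite P" "\<one> \<in> P"
    and gen: "\<And>H. subgroup H G \<Longrightarrow> P \<subseteq> H \<Longrightarrow> K \<subseteq> H"
    and S: "fam G K P S"
  shows "card P + 2 * card S \<le> 2 * card (S <#> P)"
proof -
  have Kc: "K \<subseteq> carrier G" using K subgroup.subset by blast
  have Pc: "P \<subseteq> carrier G" using PK Kc by blast
  define iP where "iP = (\<lambda>q. inv q) ` P"
  have iiP: "(\<lambda>q. inv q) ` iP = P" unfolding iP_def image_image using Pc
    by (simp add: subsetD cong: image_cong)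
  have iPK: "iP \<subseteq> K" unfolding iP_def using subgroup.m_inv_closed[OF K] PK by blast
  have fiP: "finite iP" using PK iP_def by simp
  have one_iP: "\<one> \<in> iP" unfolding iP_def using PK(3) by (metis image_eqI inv_one)
  have geniP: "K \<subseteq> H" if H: "subgroup H G" "iP \<subseteq> H" for H
  proof -
    have "P \<subseteq> H"
    proof
      fix p assume p: "p \<in> P"
      have "inv p \<in> H" using p H(2) iP_def by blast
      then have "inv (inv p) \<in> H" using subgroup.m_inv_closed[OF H(1)] by blast
      then show "p \<in> H" using p Pc by (simp add: subsetD)
    qed
    then show ?thesis using gen H(1) by blast
  qed
  have cardiP: "card iP = card P" unfolding iP_def
    by (rule card_image) (use Pc in \<open>auto intro!: inj_onI simp: subsetD\<close>)
  have SP: "S \<subseteq> S <#> P" "finite (S <#> P)" "finite S"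
    using set_mult_sup1[OF _ PK(3)] S fam_props[OF K PK(1) S] finite_set_mult PK by auto
  define C where "C k \<longleftrightarrow> (\<exists>Y R. R \<in> {P, iP} \<and> fam G K R Y \<and> card (Y <#> R) = k + card Y)" for k
  have cmono: "card Y \<le> card (Y <#> R)" if "R \<in> {P, iP}" "fam G K R Y" for Y R
  proof -
    have RK: "R \<subseteq> K" "finite R" "\<one> \<in> R" using that PK iPK fiP one_iP by auto
    have "Y \<subseteq> Y <#> R" "finite (Y <#> R)"
      using set_mult_sup1[OF _ RK(3)] fam_props[OF K RK(1) that(2)] finite_set_mult RK(2) by auto
    then show "card Y \<le> card (Y <#> R)" by (simp add: card_mono)
  qed
  have Cgen: "C (card (Y <#> R) - card Y)" if "R \<in> {P, iP}" "fam G K R Y" for Y R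
  proof -
    have "card Y \<le> card (Y <#> R)" using cmono[OF that] .
    then show ?thesis unfolding C_def using that by (intro exI[of _ Y] exI[of _ R]) auto
  qed
  define \<kappa> where "\<kappa> = (LEAST k. C k)"
  have Cx: "C (card (S <#> P) - card S)" using Cgen[of P S] S by simp
  have Ck: "C \<kappa>" unfolding \<kappa>_def using Cx by (rule LeastI)
  have least: "\<kappa> + card Y \<le> card (Y <#> R)" if "R \<in> {P, iP}" "fam G K R Y" for Y R
  proof -
    have "\<kappa> \<le> card (Y <#> R) - card Y" unfolding \<kappa>_def using Cgen[OF that] by (rule Least_le)
    then show ?thesis using cmono[OF that] by simp
  qed
  define D where "D m \<longleftrightarrow> (\<exists>Y R. R \<in> {P, iP} \<and> fam G K R Y \<and> card (Y <#> R) = \<kappa> + card Y \<and> card Y = m)" for m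
  obtain m0 where "D m0" using Ck unfolding C_def D_def by blast
  define n where "n = (LEAST m. D m)"
  have Dn: "D n" unfolding n_def using \<open>D m0\<close> by (rule LeastI)
  have leastn: "n \<le> card Y" if "R \<in> {P, iP}" "fam G K R Y" "card (Y <#> R) = \<kappa> + card Y" for Y R
    unfolding n_def using that by (intro Least_le) (auto simp: D_def)
  obtain Y R where YR: "R \<in> {P, iP}" "fam G K R Y" "card (Y <#> R) = \<kappa> + card Y" "card Y = n"
    using Dn unfolding D_def by blast
  have "card P \<le> 2 * \<kappa>"
  proof (cases "R = P")
    case True
    show ?thesis
      by (rule atom_bound[OF K PK gen iP_def least leastn]) (use YR True in auto)
  next
    case False
    then have R: "R = iP" using YR by auto
    have ins: "{iP, P} = {P, iP}" by auto
    have "card iP \<le> 2 * \<kappa>"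
      by (rule atom_bound[OF K iPK fiP one_iP geniP iiP[symmetric]])
         (use YR R least leastn ins in auto)
    then show ?thesis using cardiP by simp
  qed
  moreover have "\<kappa> + card S \<le> card (S <#> P)" using least[of P S] S by simp
  ultimately show ?thesis by simp
qed

lemma inv_cancel_left: "x \<in> carrier G \<Longrightarrow> y \<in> carrier G \<Longrightarrow> inv x \<otimes> (x \<otimes> y) = y"
  by (simp add: m_assoc[symmetric])

lemma set_inv_sub: "B \<subseteq> carrier G \<Longrightarrow> set_inv B \<subseteq> carrier G"
  unfolding SET_INV_def by auto

lemma mem_set_inv: "b \<in> B \<Longrightarrow> inv b \<in> set_inv B"
  unfolding SET_INV_def by auto

lemma main_red:
  assumes A: "A \<subseteq> carrier G" "finite A" "A \<noteq> {}"
    and B: "B \<subseteq> carrier G" "finite B" "B \<noteq> {}"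
    and Kdef: "K = generate G (B <#> set_inv B)"
  shows "(finite (A <#> K) \<and> card (A <#> K) \<le> card (A <#> B)) \<or> 2 * card A + card B \<le> 2 * card (A <#> B)"
proof -
  have BBc: "B <#> set_inv B \<subseteq> carrier G" using setmult_subset_G[OF B(1) set_inv_sub[OF B(1)]] .
  have K: "subgroup K G" unfolding Kdef by (rule generate_is_subgroup[OF BBc])
  have Kc: "K \<subseteq> carrier G" using K subgroup.subset by blast
  obtain b0 where b0: "b0 \<in> B" using B(3) by blast
  have b0c: "b0 \<in> carrier G" "inv b0 \<in> carrier G" using b0 B(1) by auto
  define P where "P = (\<lambda>b. b \<otimes> inv b0) ` B"
  have Pc: "P \<subseteq> carrier G" unfolding P_def using B(1) b0c by auto
  have PK: "P \<subseteq> K"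
  proof
    fix p assume "p \<in> P"
    then obtain b where b: "b \<in> B" "p = b \<otimes> inv b0" unfolding P_def by blast
    have "p \<in> B <#> set_inv B" unfolding mem_set_mult_iff using b mem_set_inv[OF b0] by blast
    then show "p \<in> K" unfolding Kdef by (rule generate.incl)
  qed
  have fP: "finite P" unfolding P_def using B(2) by simp
  have oneP: "\<one> \<in> P" unfolding P_def using b0 b0c by (metis image_eqI r_inv)
  have injP: "inj_on (\<lambda>b. b \<otimes> inv b0) B"
  proof (rule inj_onI)
    fix x y assume xy: "x \<in> B" "y \<in> B" "x \<otimes> inv b0 = y \<otimes> inv b0"
    have "x \<in> carrier G" "y \<in> carrier G" using xy B(1) by auto
    then show "x = y" using xy(3) b0c r_cancel by blast
  qed
  have cP: "card P = card B" unfolding P_def using card_image[OF injP] .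
  have gen: "K \<subseteq> H" if H: "subgroup H G" "P \<subseteq> H" for H
  proof -
    have "B <#> set_inv B \<subseteq> H"
    proof
      fix z assume "z \<in> B <#> set_inv B"
      then obtain b b' where bb: "b \<in> B" "b' \<in> B" "z = b \<otimes> inv b'"
        unfolding mem_set_mult_iff SET_INV_def by blast
      have bc: "b \<in> carrier G" "b' \<in> carrier G" using bb B(1) by auto
      have e1: "inv (b' \<otimes> inv b0) = b0 \<otimes> inv b'" using bc b0c by (simp add: inv_mult_group)
      have "(b \<otimes> inv b0) \<otimes> (b0 \<otimes> inv b') = b \<otimes> (inv b0 \<otimes> (b0 \<otimes> inv b'))"
        using bc b0c by (simp add: m_assoc)
      also have "\<dots> = b \<otimes> inv b'" using bc b0c by (simp add: inv_cancel_left)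
      finally have e2: "z = (b \<otimes> inv b0) \<otimes> inv (b' \<otimes> inv b0)" using e1 bb(3) by simp
      have "b \<otimes> inv b0 \<in> H" "b' \<otimes> inv b0 \<in> H" using bb H(2) unfolding P_def by auto
      then show "z \<in> H" unfolding e2 using subgroup.m_closed[OF H(1)] subgroup.m_inv_closed[OF H(1)] by blast
    qed
    then show ?thesis unfolding Kdef by (rule generate_subgroup_incl[OF _ H(1)])
  qed
  have ABc: "A <#> B \<subseteq> carrier G" using setmult_subset_G[OF A(1) B(1)] .
  have APeq: "A <#> P = (\<lambda>z. z \<otimes> inv b0) ` (A <#> B)"
  proof
    show "A <#> P \<subseteq> (\<lambda>z. z \<otimes> inv b0) ` (A <#> B)"
    proof
      fix z assume "z \<in> A <#> P"
      then obtain a b where ab: "a \<in> A" "b \<in> B" "z = a \<otimes> (b \<otimes> inv b0)" unfolding mem_set_mult_iff P_def by blast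
      have "z = (a \<otimes> b) \<otimes> inv b0" using ab A(1) B(1) b0c by (simp add: m_assoc subsetD)
      moreover have "a \<otimes> b \<in> A <#> B" using ab unfolding mem_set_mult_iff by blast
      ultimately show "z \<in> (\<lambda>z. z \<otimes> inv b0) ` (A <#> B)" by blast
    qed
    show "(\<lambda>z. z \<otimes> inv b0) ` (A <#> B) \<subseteq> A <#> P"
    proof
      fix z assume "z \<in> (\<lambda>z. z \<otimes> inv b0) ` (A <#> B)"
      then obtain w where w: "w \<in> A <#> B" "z = w \<otimes> inv b0" by blast
      then obtain a b where ab: "a \<in> A" "b \<in> B" "z = (a \<otimes> b) \<otimes> inv b0" unfolding mem_set_mult_iff by blast
      have "z = a \<otimes> (b \<otimes> inv b0)" using ab A(1) B(1) b0c by (simp add: m_assoc subsetD)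
      moreover have "b \<otimes> inv b0 \<in> P" using ab(2) unfolding P_def by blast
      ultimately show "z \<in> A <#> P" unfolding mem_set_mult_iff using ab(1) by blast
    qed
  qed
  have injAB: "inj_on (\<lambda>z. z \<otimes> inv b0) (A <#> B)"
  proof (rule inj_onI)
    fix x y assume xy: "x \<in> A <#> B" "y \<in> A <#> B" "x \<otimes> inv b0 = y \<otimes> inv b0"
    have "x \<in> carrier G" "y \<in> carrier G" using xy ABc by auto
    then show "x = y" using xy(3) b0c r_cancel by blast
  qed
  have cAP: "card (A <#> P) = card (A <#> B)" unfolding APeq using card_image[OF injAB] .
  have fAP: "finite (A <#> P)" using finite_set_mult[OF A(2) fP] .
  show ?thesis
  proof (cases "\<forall>a\<in>A. (A \<inter> (\<otimes>) a ` K) <#> P = (\<otimes>) a ` K")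
    case True
    have "A <#> P = A <#> K"
    proof
      show "A <#> P \<subseteq> A <#> K" using PK unfolding set_mult_def by blast
      show "A <#> K \<subseteq> A <#> P"
      proof
        fix z assume "z \<in> A <#> K"
        then obtain a k where ak: "a \<in> A" "k \<in> K" "z = a \<otimes> k" unfolding mem_set_mult_iff by blast
        have "z \<in> (A \<inter> (\<otimes>) a ` K) <#> P" using True ak by auto
        then show "z \<in> A <#> P" unfolding mem_set_mult_iff by blast
      qed
    qed
    then show ?thesis using fAP cAP by simp
  next
    case False
    then obtain a where a: "a \<in> A" "(A \<inter> (\<otimes>) a ` K) <#> P \<noteq> (\<otimes>) a ` K" by blast
    have ac: "a \<in> carrier G" "inv a \<in> carrier G" using a A(1) by auto
    define A1 where "A1 = A \<inter> (\<otimes>) a ` K"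
    define A2 where "A2 = A - (\<otimes>) a ` K"
    have A1c: "A1 \<subseteq> carrier G" "finite A1" using A A1_def by auto
    have A2c: "A2 \<subseteq> carrier G" "finite A2" using A A2_def by auto
    have aA1: "a \<in> A1"
    proof -
      have "a = a \<otimes> \<one>" using ac by simp
      then show ?thesis unfolding A1_def using a(1) subgroup.one_closed[OF K] by blast
    qed
    define S where "S = (\<otimes>) (inv a) ` A1"
    have bk: "(\<otimes>) (inv a) ` ((\<otimes>) a ` K) = K" using translate_back[OF ac(1) Kc] .
    have SK: "S \<subseteq> K"
    proof -
      have "S \<subseteq> (\<otimes>) (inv a) ` ((\<otimes>) a ` K)" unfolding S_def A1_def by blast
      then show ?thesis using bk by simp
    qed
    have A1Pc: "A1 <#> P \<subseteq> carrier G" using setmult_subset_G[OF A1c(1) Pc] .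
    have SP: "S <#> P = (\<otimes>) (inv a) ` (A1 <#> P)" unfolding S_def
      by (rule set_mult_translate[OF ac(2) A1c(1) Pc])
    have famS: "fam G K P S"
    proof -
      have "S <#> P \<noteq> K"
      proof
        assume h: "S <#> P = K"
        have "A1 <#> P = (\<otimes>) (inv (inv a)) ` ((\<otimes>) (inv a) ` (A1 <#> P))"
          using translate_back[OF ac(2) A1Pc] by simp
        also have "\<dots> = (\<otimes>) a ` K" using h SP ac by simp
        finally show False using a(2) A1_def by simp
      qed
      moreover have "S \<noteq> {}" using aA1 S_def by blast
      moreover have "finite S" using A1c S_def by simp
      ultimately show ?thesis unfolding fam_def using SK by blast
    qed
    have cr: "card P + 2 * card S \<le> 2 * card (S <#> P)" by (rule core[OF K PK fP oneP gen famS])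
    have cS: "card S = card A1" unfolding S_def by (rule card_translate[OF ac(2) A1c(1)])
    have cSP: "card (S <#> P) = card (A1 <#> P)" unfolding SP by (rule card_translate[OF ac(2) A1Pc])
    have AA: "A = A1 \<union> A2" "A1 \<inter> A2 = {}" unfolding A1_def A2_def by auto
    have cA: "card A = card A1 + card A2" using card_Un_disjoint[OF A1c(2) A2c(2) AA(2)] AA(1) by simp
    have APu: "A <#> P = (A1 <#> P) \<union> (A2 <#> P)" using AA(1) set_mult_Un by metis
    have A1P: "A1 <#> P \<subseteq> (\<otimes>) a ` K"
    proof
      fix z assume "z \<in> A1 <#> P"
      then obtain x p where xp: "x \<in> A1" "p \<in> P" "z = x \<otimes> p" unfolding mem_set_mult_iff by blast
      then obtain k where k: "k \<in> K" "x = a \<otimes> k" unfolding A1_def by blast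
      have kc: "k \<in> carrier G" "p \<in> carrier G" using k Kc xp Pc by auto
      have "z = a \<otimes> (k \<otimes> p)" using xp k kc ac by (simp add: m_assoc)
      moreover have "k \<otimes> p \<in> K" using subgroup.m_closed[OF K k(1)] PK xp(2) by blast
      ultimately show "z \<in> (\<otimes>) a ` K" by blast
    qed
    have A2P: "(A2 <#> P) \<inter> (\<otimes>) a ` K = {}"
    proof (rule ccontr)
      assume "(A2 <#> P) \<inter> (\<otimes>) a ` K \<noteq> {}"
      then obtain w where w: "w \<in> A2 <#> P" "w \<in> (\<otimes>) a ` K" by blast
      from w(1) obtain x p where xp0: "x \<in> A2" "p \<in> P" "w = x \<otimes> p"
        unfolding mem_set_mult_iff by blast
      from w(2) obtain k where k0: "k \<in> K" "w = a \<otimes> k" by blast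
      have xp: "x \<in> A2" "p \<in> P" "k \<in> K" "x \<otimes> p = a \<otimes> k" using xp0 k0 by auto
      have c: "x \<in> carrier G" "p \<in> carrier G" "k \<in> carrier G" using xp A2c Pc Kc by auto
      have akc: "a \<otimes> k \<in> carrier G" using ac c by simp
      have "x = (a \<otimes> k) \<otimes> inv p" using inv_solve_right[OF c(1) akc c(2)] xp(4) by simp
      then have "x = a \<otimes> (k \<otimes> inv p)" using c ac by (simp add: m_assoc)
      moreover have "k \<otimes> inv p \<in> K"
        using subgroup.m_closed[OF K xp(3) subgroup.m_inv_closed[OF K]] PK xp(2) by (simp add: subsetD)
      ultimately have "x \<in> (\<otimes>) a ` K" by blast
      then show False using xp(1) A2_def by blast
    qed
    have fA1P: "finite (A1 <#> P)" using finite_set_mult[OF A1c(2) fP] .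
    have fA2P: "finite (A2 <#> P)" using finite_set_mult[OF A2c(2) fP] .
    have disj: "(A1 <#> P) \<inter> (A2 <#> P) = {}" using A1P A2P by blast
    have cAPs: "card (A <#> P) = card (A1 <#> P) + card (A2 <#> P)"
      using card_Un_disjoint[OF fA1P fA2P disj] APu by simp
    have "card A2 \<le> card (A2 <#> P)" using card_mono[OF fA2P set_mult_sup1[OF A2c(1) oneP]] .
    then have "2 * card A + card B \<le> 2 * card (A <#> B)" using cr cS cSP cA cAPs cAP cP by simp
    then show ?thesis by blast
  qed
qed

lemma set_pow_props:
  assumes "B \<subseteq> carrier G" "finite B" "B \<noteq> {}"
  shows "set_pow G B j \<subseteq> carrier G \<and> finite (set_pow G B j) \<and> set_pow G B j \<noteq> {}"
proof (induction j)
  case 0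
  then show ?case by simp
next
  case (Suc j)
  have c: "set_pow G B j <#> B \<subseteq> carrier G" using setmult_subset_G Suc assms by blast
  have f: "finite (set_pow G B j <#> B)" using finite_set_mult Suc assms by blast
  obtain x b where "x \<in> set_pow G B j" "b \<in> B" using Suc assms by blast
  then have "x \<otimes> b \<in> set_pow G B j <#> B" unfolding mem_set_mult_iff by blast
  then show ?case using c f by auto
qed

lemma set_pow_one: "B \<subseteq> carrier G \<Longrightarrow> set_pow G B (Suc 0) = B"
proof -
  assume B: "B \<subseteq> carrier G"
  have "{\<one>} <#> B = B"
  proof
    show "{\<one>} <#> B \<subseteq> B" using B unfolding set_mult_def by (auto simp: subsetD)
    show "B \<subseteq> {\<one>} <#> B"
    proof
      fix b assume b: "b \<in> B"
      then have "b = \<one> \<otimes> b" using B by (simp add: subsetD)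
      then show "b \<in> {\<one>} <#> B" unfolding mem_set_mult_iff using b by blast
    qed
  qed
  then show ?thesis by simp
qed

lemma coset_card:
  assumes K: "subgroup K G" and A: "A \<subseteq> carrier G" "finite A" "A \<noteq> {}"
  shows "(finite K \<longrightarrow> finite (A <#> K) \<and> card K \<le> card (A <#> K)) \<and> (infinite K \<longrightarrow> infinite (A <#> K))"
proof -
  have Kc: "K \<subseteq> carrier G" using K subgroup.subset by blast
  obtain a where a: "a \<in> A" using A by blast
  have ac: "a \<in> carrier G" using a A by blast
  have sub: "(\<otimes>) a ` K \<subseteq> A <#> K" using a by (auto simp: mem_set_mult_iff intro!: bexI)
  have inj: "inj_on ((\<otimes>) a) K"
  proof (rule inj_onI)
    fix x y assume xy: "x \<in> K" "y \<in> K" "a \<otimes> x = a \<otimes> y"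
    have "x \<in> carrier G" "y \<in> carrier G" using xy Kc by auto
    then show "x = y" using xy(3) ac l_cancel by blast
  qed
  have ci: "card ((\<otimes>) a ` K) = card K" using card_image[OF inj] .
  show ?thesis
  proof (intro conjI impI)
    assume fK: "finite K"
    show fAK: "finite (A <#> K)" using finite_set_mult[OF A(2) fK] .
    show "card K \<le> card (A <#> K)" using card_mono[OF fAK sub] ci by simp
  next
    assume iK: "infinite K"
    show "infinite (A <#> K)"
    proof
      assume "finite (A <#> K)"
      then have "finite ((\<otimes>) a ` K)" using sub finite_subset by blast
      then show False using iK finite_image_iff[OF inj] by blast
    qed
  qed
qed

end

theorem mainTheorem10:
  fixes G (structure) and A B :: "'a set"
  assumes "group G"
    and "A \<subseteq> carrier G" and "finite A" and "A \<noteq> {}"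
    and "B \<subseteq> carrier G" and "finite B" and "B \<noteq> {}"
  defines "K \<equiv> generate G (B <#> set_inv B)"
  shows "(\<forall>j::nat. j \<ge> 1 \<longrightarrow>
           real (card (set_pow G B j)) \<ge>
             (if finite K then min (real (card K)) (real (j + 1) * real (card B) / 2)
              else real (j + 1) * real (card B) / 2))
         \<and> real (card (A <#> B)) \<ge>
           (if finite (A <#> K) then min (real (card (A <#> K))) (real (card A) + real (card B) / 2)
            else real (card A) + real (card B) / 2)"
proof -
  interpret group G by fact
  have Keq: "K = generate G (B <#> set_inv B)" using K_def by simp
  have Bp: "B \<subseteq> carrier G" "finite B" "B \<noteq> {}" using assms by auto
  have BBc: "B <#> set_inv B \<subseteq> carrier G" using setmult_subset_G[OF Bp(1) set_inv_sub[OF Bp(1)]] .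
  have K: "subgroup K G" unfolding K_def by (rule generate_is_subgroup[OF BBc])
  have part2: "real (card (A <#> B)) \<ge>
           (if finite (A <#> K) then min (real (card (A <#> K))) (real (card A) + real (card B) / 2)
            else real (card A) + real (card B) / 2)"
  proof -
    have mr: "(finite (A <#> K) \<and> card (A <#> K) \<le> card (A <#> B)) \<or> 2 * card A + card B \<le> 2 * card (A <#> B)"
      by (rule main_red[OF assms(2,3,4) Bp Keq])
    show ?thesis
    proof (cases "finite (A <#> K)")
      case True
      then show ?thesis
      proof (cases "card (A <#> K) \<le> card (A <#> B)")
        case True
        then have "real (card (A <#> K)) \<le> real (card (A <#> B))" by simp
        then show ?thesis using \<open>finite (A <#> K)\<close> by (simp add: min_le_iff_disj)
      next
        case False
        then have "real (2 * card A + card B) \<le> real (2 * card (A <#> B))" using mr True by simp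
        then have "real (card A) + real (card B) / 2 \<le> real (card (A <#> B))" by simp
        then show ?thesis using \<open>finite (A <#> K)\<close> by (simp add: min_le_iff_disj)
      qed
    next
      case False
      then have "real (2 * card A + card B) \<le> real (2 * card (A <#> B))" using mr by simp
      then have "real (card A) + real (card B) / 2 \<le> real (card (A <#> B))" by simp
      then show ?thesis using False by simp
    qed
  qed
  have part1: "real (card (set_pow G B j)) \<ge>
             (if finite K then min (real (card K)) (real (j + 1) * real (card B) / 2)
              else real (j + 1) * real (card B) / 2)" if j: "j \<ge> 1" for j
    using j
  proof (induction j rule: nat_induct_at_least)
    case base
    have "set_pow G B 1 = B" using set_pow_one[OF Bp(1)] by simp
    then show ?case by (simp add: min_le_iff_disj)
  next
    case (Suc n)
    define Bj where "Bj = set_pow G B n"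
    have Bjp: "Bj \<subseteq> carrier G" "finite Bj" "Bj \<noteq> {}" using set_pow_props[OF Bp] Bj_def by auto
    have eq: "set_pow G B (Suc n) = Bj <#> B" unfolding Bj_def by simp
    have mr: "(finite (Bj <#> K) \<and> card (Bj <#> K) \<le> card (Bj <#> B)) \<or> 2 * card Bj + card B \<le> 2 * card (Bj <#> B)"
      by (rule main_red[OF Bjp Bp Keq])
    have cc: "(finite K \<longrightarrow> finite (Bj <#> K) \<and> card K \<le> card (Bj <#> K)) \<and> (infinite K \<longrightarrow> infinite (Bj <#> K))"
      by (rule coset_card[OF K Bjp])
    have IH: "real (card Bj) \<ge> (if finite K then min (real (card K)) (real (n + 1) * real (card B) / 2)
              else real (n + 1) * real (card B) / 2)" using Suc.IH Bj_def by simp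
    have r: "real (Suc n + 1) * real (card B) / 2 = real (n + 1) * real (card B) / 2 + real (card B) / 2"
      by (simp add: field_simps)
    show ?case
    proof (cases "finite K")
      case True
      show ?thesis
      proof (cases "card (Bj <#> K) \<le> card (Bj <#> B)")
        case True
        then have "card K \<le> card (Bj <#> B)" using cc \<open>finite K\<close> by simp
        then have "real (card K) \<le> real (card (Bj <#> B))" by simp
        then show ?thesis using \<open>finite K\<close> eq by (simp add: min_le_iff_disj)
      next
        case False
        then have "real (2 * card Bj + card B) \<le> real (2 * card (Bj <#> B))" using mr by simp
        then have h: "real (card Bj) + real (card B) / 2 \<le> real (card (Bj <#> B))" by simp
        have IH': "min (real (card K)) (real (n + 1) * real (card B) / 2) \<le> real (card Bj)"
          using IH True by simp
        have "min (real (card K)) (real (Suc n + 1) * real (card B) / 2) \<le> real (card (Bj <#> B))"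
        proof (cases "real (card K) \<le> real (n + 1) * real (card B) / 2")
          case True
          then have "real (card K) \<le> real (card Bj)" using IH' by simp
          then show ?thesis using h by (simp add: min_le_iff_disj)
        next
          case False
          then have "real (n + 1) * real (card B) / 2 \<le> real (card Bj)" using IH' by simp
          then show ?thesis using h r by (simp add: min_le_iff_disj)
        qed
        then show ?thesis using \<open>finite K\<close> eq by simp
      qed
    next
      case False
      then have "infinite (Bj <#> K)" using cc by simp
      then have "real (2 * card Bj + card B) \<le> real (2 * card (Bj <#> B))" using mr by simp
      then have h: "real (card Bj) + real (card B) / 2 \<le> real (card (Bj <#> B))" by simp
      have "real (n + 1) * real (card B) / 2 \<le> real (card Bj)" using IH False by simp
      then show ?thesis using h r False eq by simp
    qed
  qed
  show ?thesis using part1 part2 by blast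
qed

end
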